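(* In the setting of the context, for every choice of keys $k,k'$ and permutation $\sigma$, the original ciphertext $M_f^{(0)}$ and the anamorphic ciphertext $M_f^{(1)}$ are computationally indistinguishable: for every quantum circuit $C$ with a single-bit classical output, \[ \big|\Pr[C(M_f^{(0)})=1]-\Pr[C(M_f^{(1)})=1]\big|<\varepsilon . \]
   Context: Let $d_1\ge d_2\ge1$, $\mathcal H_M=(\mathbb C^2)^{\otimes d_1}$, $\mathcal H_{M_c}=(\mathbb C^2)^{\otimes d_2}$, and $U_k=\bigotimes_{j}X^{k_{2j-1}}Z^{k_{2j}}$ (Pauli $X,Z$) for bit strings $k$. $M_o$ is a strictly positive definite density matrix on $\mathcal H_M$, $M_c$ a density matrix on $\mathcal H_{M_c}$; $M_o'=U_kM_oU_k^\dagger$ ($k\in\{0,1\}^{2d_1}$), $M_c'=U_{k'}M_cU_{k'}^\dagger$ ($k'\in\{0,1\}^{2d_2}$), $V|\psi\rangle=|\psi\rangle\otimes|0\rangle^{\otimes(d_1-d_2)}$, $M_c''=VM_c'V^\dagger$. For $\eta\in\mathbb Z^+$, on $\mathbb C^2\otimes\mathcal H_M$ (blocks w.r.t. the first qubit), $M_a^{(0)}=\begin{pmatrix}\frac12M_o'&0\\0&\frac12M_o'\end{pmatrix}$, $M_a^{(1)}=\begin{pmatrix}\frac12M_o'&\frac1\eta M_c''\\\frac1\eta(M_c'')^\dagger&\frac12M_o'\end{pmatrix}$, $M_f^{(b)}=U_\sigma M_a^{(b)}U_\sigma^\dagger$ with $U_\sigma$ a $2^{d_1+1}\times2^{d_1+1}$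 permutation matrix. Standing assumption of the construction: for a given threshold $\varepsilon>0$ (written $\mathsf{negl}(\lambda)$), $\eta$ satisfies $1/\eta<\varepsilon$ and $\frac1{\eta^2}\|M_c''(M_o')^{-1}M_c''\|\le\frac14\lambda_{\min}(M_o')$ (operator norm). *)

theory Defs
  imports "Jordan_Normal_Form.Char_Poly" "HOL-Combinatorics.Permutations"
begin

definition cadj :: "complex mat \<Rightarrow> complex mat" where
  "cadj A = mat (dim_col A) (dim_row A) (\<lambda>(i,j). cnj (A $$ (j,i)))"

definition mtrace :: "complex mat \<Rightarrow> complex" where
  "mtrace A = (\<Sum>i<dim_row A. A $$ (i,i))"

text \<open>Kronecker (tensor) product; the first factor is the most significant index.\<close>
definition kron :: "complex mat \<Rightarrow> complex mat \<Rightarrow> complex mat" where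
  "kron A B = mat (dim_row A * dim_row B) (dim_col A * dim_col B)
     (\<lambda>(i,j). A $$ (i div dim_row B, j div dim_col B) * B $$ (i mod dim_row B, j mod dim_col B))"

definition pauliX :: "complex mat" where
  "pauliX = mat 2 2 (\<lambda>(i,j). if i \<noteq> j then 1 else 0)"

definition pauliZ :: "complex mat" where
  "pauliZ = mat 2 2 (\<lambda>(i,j). if i = j then (if i = 0 then 1 else -1) else 0)"

text \<open>U_k = tensor over j of X^(k_(2j-1)) Z^(k_(2j)), for a bit string k of even length
  (given as a list of booleans, k_1 first).\<close>
fun pauliU :: "bool list \<Rightarrow> complex mat" where
  "pauliU [] = 1\<^sub>m 1"
| "pauliU [a] = 1\<^sub>m 1"
| "pauliU (a # b # r) =
     kron ((if a then pauliX else 1\<^sub>m 2) * (if b then pauliZ else 1\<^sub>m 2)) (pauliU r)"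

definition qform :: "complex mat \<Rightarrow> complex vec \<Rightarrow> complex" where
  "qform A v = (\<Sum>i<dim_vec v. \<Sum>j<dim_vec v. cnj (v $ i) * A $$ (i,j) * v $ j)"

definition psd :: "nat \<Rightarrow> complex mat \<Rightarrow> bool" where
  "psd n A \<longleftrightarrow> A \<in> carrier_mat n n \<and>
     (\<forall>v \<in> carrier_vec n. Im (qform A v) = 0 \<and> Re (qform A v) \<ge> 0)"

definition pos_def :: "nat \<Rightarrow> complex mat \<Rightarrow> bool" where
  "pos_def n A \<longleftrightarrow> A \<in> carrier_mat n n \<and>
     (\<forall>v \<in> carrier_vec n. v \<noteq> 0\<^sub>v n \<longrightarrow> Im (qform A v) = 0 \<and> Re (qform A v) > 0)"

definition density :: "nat \<Rightarrow> complex mat \<Rightarrow> bool" where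
  "density n A \<longleftrightarrow> psd n A \<and> mtrace A = 1"

definition cvec_norm :: "complex vec \<Rightarrow> real" where
  "cvec_norm v = sqrt (\<Sum>i<dim_vec v. (cmod (v $ i))\<^sup>2)"

definition opnorm :: "complex mat \<Rightarrow> real" where
  "opnorm A = Sup {cvec_norm (A *\<^sub>v v) | v. v \<in> carrier_vec (dim_col A) \<and> cvec_norm v = 1}"

text \<open>Smallest eigenvalue (used for Hermitian matrices, whose eigenvalues are real).\<close>
definition lambda_min :: "complex mat \<Rightarrow> real" where
  "lambda_min A = Min {Re k | k. eigenvalue A k}"

definition minv :: "complex mat \<Rightarrow> complex mat" where
  "minv A = (THE B. B \<in> carrier_mat (dim_row A) (dim_row A) \<and>
                    A * B = 1\<^sub>m (dim_row A) \<and> B * A = 1\<^sub>m (dim_row A))"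

text \<open>Isometry V|psi> = |psi> tensor |0>^(d1-d2).\<close>
definition padV :: "nat \<Rightarrow> nat \<Rightarrow> complex mat" where
  "padV d1 d2 = mat (2^d1) (2^d2) (\<lambda>(i,j). if i = j * 2^(d1-d2) then 1 else 0)"

definition perm_mat :: "nat \<Rightarrow> (nat \<Rightarrow> nat) \<Rightarrow> complex mat" where
  "perm_mat n \<sigma> = mat n n (\<lambda>(i,j). if i = \<sigma> j then 1 else 0)"

text \<open>A quantum circuit with one-bit classical output acting on an n-dimensional state
  is described by its accepting measurement effect E, 0 <= E <= I; Pr[C(rho)=1] = tr(E rho).\<close>
definition effect :: "nat \<Rightarrow> complex mat \<Rightarrow> bool" where
  "effect n E \<longleftrightarrow> psd n E \<and> psd n (1\<^sub>m n - E)"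

definition accept_prob :: "complex mat \<Rightarrow> complex mat \<Rightarrow> real" where
  "accept_prob E \<rho> = Re (mtrace (E * \<rho>))"

end

theory Submission
  imports Defs
begin


lemma sum_split_add: "(\<Sum>k<a+b. f k) = (\<Sum>k<a. f k) + (\<Sum>k<b. f (a+k))"
  for f :: "nat \<Rightarrow> 'a::comm_monoid_add"
  by (induction b) (simp_all add: add.assoc)

lemma sum_split_mult: "(\<Sum>k<a*b. f k) = (\<Sum>i<a. \<Sum>j<b. f (i*b+j))"
  for f :: "nat \<Rightarrow> 'a::comm_monoid_add"
proof (induction a)
  case (Suc a)
  have "(\<Sum>k<Suc a*b. f k) = (\<Sum>k<a*b + b. f k)" by (simp add: add.commute)
  also have "\<dots> = (\<Sum>k<a*b. f k) + (\<Sum>k<b. f (a*b+k))" by (rule sum_split_add)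
  finally show ?case using Suc by simp
qed simp

definition fq :: "nat \<Rightarrow> (nat \<Rightarrow> nat \<Rightarrow> complex) \<Rightarrow> (nat \<Rightarrow> complex) \<Rightarrow> complex" where
  "fq n A x = (\<Sum>i<n. \<Sum>j<n. cnj (x i) * A i j * x j)"

definition fpsd :: "nat \<Rightarrow> (nat \<Rightarrow> nat \<Rightarrow> complex) \<Rightarrow> bool" where
  "fpsd n A \<longleftrightarrow> (\<forall>x. Im (fq n A x) = 0 \<and> Re (fq n A x) \<ge> 0)"

lemma fq_supp:
  assumes "\<And>k. k \<notin> S \<Longrightarrow> x k = 0" "S \<subseteq> {..<n}"
  shows "fq n A x = (\<Sum>i\<in>S. \<Sum>j\<in>S. cnj (x i) * A i j * x j)"
proof -
  have fS: "finite S" using assms(2) finite_subset by blast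
  have "fq n A x = (\<Sum>i<n. \<Sum>j\<in>S. cnj (x i) * A i j * x j)"
    unfolding fq_def
    by (intro sum.cong refl sum.mono_neutral_right) (use assms fS in auto)
  also have "\<dots> = (\<Sum>i\<in>S. \<Sum>j\<in>S. cnj (x i) * A i j * x j)"
    by (intro sum.mono_neutral_right) (use assms in auto)
  finally show ?thesis .
qed

lemma fpsd_diag:
  assumes "fpsd n A" "i < n"
  shows "Im (A i i) = 0" "Re (A i i) \<ge> 0"
proof -
  have "fq n A (\<lambda>k. if k = i then 1 else 0) = A i i"
    by (subst fq_supp[of "{i}"]) (use assms in auto)
  then show "Im (A i i) = 0" "Re (A i i) \<ge> 0" using assms(1) unfolding fpsd_def by metis+
qed

lemma fpsd_herm:
  assumes "fpsd n A" "i < n" "j < n"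
  shows "A j i = cnj (A i j)"
proof (cases "i = j")
  case True
  then show ?thesis using fpsd_diag[OF assms(1,2)] by (simp add: complex_eq_iff)
next
  case False
  have d: "Im (A i i) = 0" "Im (A j j) = 0" using fpsd_diag assms by auto
  have e1: "fq n A (\<lambda>k. if k = i then 1 else if k = j then 1 else 0) = A i i + A i j + A j i + A j j"
    by (subst fq_supp[of "{i,j}"]) (use assms False in auto)
  have "Im (fq n A (\<lambda>k. if k = i then 1 else if k = j then 1 else 0)) = 0"
    using assms(1) unfolding fpsd_def by blast
  then have 1: "Im (A i j) + Im (A j i) = 0" unfolding e1 using d by simp
  have e2: "fq n A (\<lambda>k. if k = i then 1 else if k = j then \<i> else 0) = A i i + \<i> * A i j - \<i> * A j i + A j j"
    by (subst fq_supp[of "{i,j}"]) (use assms False in \<open>auto simp: algebra_simps\<close>)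
  have "Im (fq n A (\<lambda>k. if k = i then 1 else if k = j then \<i> else 0)) = 0"
    using assms(1) unfolding fpsd_def by blast
  then have 2: "Re (A i j) - Re (A j i) = 0" unfolding e2 using d by simp
  show ?thesis using 1 2 by (simp add: complex_eq_iff)
qed

lemma mult_if0: "(a::complex) * (if P then b else 0) = (if P then a * b else 0)" by simp

lemma fq_add_e:
  assumes "fpsd n A" "p < n"
  shows "fq n A (\<lambda>k. x k + (if k = p then t else 0)) =
    fq n A x + cnj t * (\<Sum>j<n. A p j * x j) + t * cnj (\<Sum>j<n. A p j * x j) + cnj t * t * A p p"
proof -
  let ?e = "\<lambda>k. if k = p then t else 0"
  have "fq n A (\<lambda>k. x k + ?e k) = (\<Sum>i<n. \<Sum>j<n. cnj (x i) * A i j * x j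
      + cnj (x i) * A i j * ?e j + cnj (?e i) * A i j * x j + cnj (?e i) * A i j * ?e j)"
    unfolding fq_def by (intro sum.cong refl) (simp add: algebra_simps)
  also have "\<dots> = fq n A x + (\<Sum>i<n. \<Sum>j<n. cnj (x i) * A i j * ?e j)
      + (\<Sum>i<n. \<Sum>j<n. cnj (?e i) * A i j * x j) + (\<Sum>i<n. \<Sum>j<n. cnj (?e i) * A i j * ?e j)"
    unfolding fq_def by (simp add: sum.distrib)
  also have "(\<Sum>i<n. \<Sum>j<n. cnj (x i) * A i j * ?e j) = (\<Sum>i<n. cnj (x i) * A i p * t)"
    using assms(2) by (simp add: if_distrib sum.delta cong: if_cong)
  also have "\<dots> = t * cnj (\<Sum>j<n. A p j * x j)"
    by (simp add: sum_distrib_left fpsd_herm[OF assms(1) _ assms(2)] algebra_simps)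
  also have "(\<Sum>i<n. \<Sum>j<n. cnj (?e i) * A i j * x j) = cnj t * (\<Sum>j<n. A p j * x j)"
  proof -
    have "\<And>i. (\<Sum>j<n. cnj (?e i) * A i j * x j) = (if i = p then (\<Sum>j<n. cnj t * (A p j * x j)) else 0)"
      by (auto simp: mult.assoc)
    then show ?thesis using assms(2) by (simp add: sum.delta sum_distrib_left)
  qed
  also have "(\<Sum>i<n. \<Sum>j<n. cnj (?e i) * A i j * ?e j) = cnj t * t * A p p"
  proof -
    have "\<And>i. (\<Sum>j<n. cnj (?e i) * A i j * ?e j) = (if i = p then cnj t * t * A p p else 0)"
      using assms(2) by (auto simp: mult_if0 sum.delta algebra_simps)
    then show ?thesis using assms(2) by (simp add: sum.delta)
  qed
  finally show ?thesis by (simp add: algebra_simps)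
qed

lemma fpsd_cs:
  assumes A: "fpsd n A" and p: "p < n"
  shows "(cmod (\<Sum>j<n. A p j * x j))\<^sup>2 \<le> Re (A p p) * Re (fq n A x)"
proof -
  define c where "c = (\<Sum>j<n. A p j * x j)"
  define a where "a = Re (A p p)"
  define q where "q = Re (fq n A x)"
  have App: "A p p = complex_of_real a" using fpsd_diag[OF A p] unfolding a_def by (simp add: complex_eq_iff)
  have a0: "a \<ge> 0" using fpsd_diag[OF A p] unfolding a_def by simp
  have cc: "cnj c * c = complex_of_real ((cmod c)\<^sup>2)"
    by (metis complex_norm_square mult.commute of_real_power)
  have key: "0 \<le> q - 2*r*(cmod c)\<^sup>2 + r\<^sup>2*(cmod c)\<^sup>2 * a" for r :: real
  proof -
    define t where "t = - (complex_of_real r * c)"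
    have "0 \<le> Re (fq n A (\<lambda>k. x k + (if k = p then t else 0)))" using A unfolding fpsd_def by blast
    also have "fq n A (\<lambda>k. x k + (if k = p then t else 0)) =
        fq n A x + cnj t * c + t * cnj c + cnj t * t * A p p"
      unfolding c_def by (rule fq_add_e[OF A p])
    also have "cnj t * c = - complex_of_real r * (cnj c * c)" unfolding t_def by simp
    also have "t * cnj c = - complex_of_real r * (cnj c * c)" unfolding t_def by (simp add: algebra_simps)
    also have "cnj t * t = complex_of_real (r^2) * (cnj c * c)" unfolding t_def by (simp add: algebra_simps power2_eq_square)
    finally show ?thesis unfolding cc App q_def by (simp add: algebra_simps)
  qed
  show ?thesis
  proof (cases "a > 0")
    case True
    have "0 \<le> q - 2*(1/a)*(cmod c)\<^sup>2 + (1/a)\<^sup>2*(cmod c)\<^sup>2 * a" by (rule key)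
    also have "\<dots> = q - (cmod c)\<^sup>2 / a" using True by (simp add: field_simps power2_eq_square)
    finally show ?thesis using True unfolding c_def[symmetric] a_def[symmetric] q_def[symmetric]
      by (simp add: field_simps)
  next
    case False
    then have a: "a = 0" using a0 by simp
    show ?thesis
    proof (rule ccontr)
      assume "\<not> ?thesis"
      then have pos: "(cmod c)\<^sup>2 > 0" unfolding c_def[symmetric] a_def[symmetric] a by (simp add: q_def)
      have "0 \<le> q - 2*((q+1)/(2*(cmod c)\<^sup>2))*(cmod c)\<^sup>2 + ((q+1)/(2*(cmod c)\<^sup>2))\<^sup>2*(cmod c)\<^sup>2 * a" by (rule key)
      also have "\<dots> = -1" using pos a by (simp add: field_simps)
      finally show False by simp
    qed
  qed
qed

definition ftr :: "nat \<Rightarrow> (nat \<Rightarrow> nat \<Rightarrow> complex) \<Rightarrow> (nat \<Rightarrow> nat \<Rightarrow> complex) \<Rightarrow> complex" where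
  "ftr n H A = (\<Sum>i<n. \<Sum>j<n. H j i * A i j)"

lemma fpsd_zero_row:
  assumes A: "fpsd n A" and p: "p < n" and j: "j < n" and z: "A p p = 0"
  shows "A p j = 0" "A j p = 0"
proof -
  have "(cmod (\<Sum>l<n. A p l * (if l = j then 1 else 0)))\<^sup>2 \<le> Re (A p p) * Re (fq n A (\<lambda>l. if l = j then 1 else 0))"
    by (rule fpsd_cs[OF A p])
  then have "(cmod (A p j))\<^sup>2 \<le> 0" using z j by (simp add: mult_if0)
  then show "A p j = 0" by simp
  then show "A j p = 0" using fpsd_herm[OF A p j] by simp
qed

lemma ftr_pos_aux:
  assumes H: "fpsd n H"
  shows "k = n - m \<Longrightarrow> m \<le> n \<Longrightarrow> fpsd n A \<Longrightarrow> (\<And>i j. i < n \<Longrightarrow> j < n \<Longrightarrow> i < m \<or> j < m \<Longrightarrow> A i j = 0)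
     \<Longrightarrow> 0 \<le> Re (ftr n H A)"
proof (induction k arbitrary: m A)
  case 0
  then have "m = n" by simp
  then have "ftr n H A = 0" unfolding ftr_def using 0 by (intro sum.neutral) auto
  then show ?case by simp
next
  case (Suc k)
  define p where "p = m"
  have p: "p < n" using Suc unfolding p_def by simp
  have A: "fpsd n A" by fact
  have k: "k = n - Suc m" using Suc by simp
  show ?case
  proof (cases "A p p = 0")
    case True
    show ?thesis
    proof (rule Suc.IH[OF k _ A])
      fix i j assume ij: "i < n" "j < n" "i < Suc m \<or> j < Suc m"
      show "A i j = 0"
      proof (cases "i < m \<or> j < m")
        case True then show ?thesis using Suc.prems ij by blast
      next
        case False
        then have "i = p \<or> j = p" using ij unfolding p_def by auto
        then show ?thesis using fpsd_zero_row[OF A p _ True] ij by auto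
      qed
    qed (use p p_def in auto)
  next
    case False
    define a where "a = Re (A p p)"
    have App: "A p p = complex_of_real a" using fpsd_diag[OF A p] unfolding a_def by (simp add: complex_eq_iff)
    have a0: "a > 0" using fpsd_diag[OF A p] False App unfolding a_def
      by (metis less_eq_real_def of_real_0)
    define s where "s = sqrt a"
    have s0: "s > 0" and ss: "s * s = a" using a0 unfolding s_def by auto
    define v where "v i = A i p / complex_of_real s" for i
    define A' where "A' i j = A i j - v i * cnj (v j)" for i j
    have vp: "v p = complex_of_real s" unfolding v_def App using ss s0
      by (metis mult_eq_0_iff nonzero_mult_div_cancel_right of_real_eq_0_iff of_real_mult order_less_irrefl)
    have cv: "cnj (v j) = A p j / complex_of_real s" if "j < n" for j
      unfolding v_def using fpsd_herm[OF A that p] by simp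
    have A'fq: "fq n A' x = fq n A x - cnj w * w" if w: "w = (\<Sum>j<n. cnj (v j) * x j)" for x w
    proof -
      have "fq n A' x = fq n A x - (\<Sum>i<n. \<Sum>j<n. cnj (x i) * v i * (cnj (v j) * x j))"
        unfolding fq_def A'_def by (simp add: sum_subtractf algebra_simps)
      also have "(\<Sum>i<n. \<Sum>j<n. cnj (x i) * v i * (cnj (v j) * x j)) = cnj w * w"
        unfolding w cnj_sum sum_product by (simp add: algebra_simps)
      finally show ?thesis .
    qed
    have A'psd: "fpsd n A'"
      unfolding fpsd_def
    proof
      fix x
      define w where "w = (\<Sum>j<n. cnj (v j) * x j)"
      define c where "c = (\<Sum>j<n. A p j * x j)"
      have wc: "w = c / complex_of_real s" unfolding w_def c_def using cv
        by (simp add: sum_divide_distrib)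
      have cs: "(cmod c)\<^sup>2 \<le> a * Re (fq n A x)" using fpsd_cs[OF A p, of x] unfolding c_def a_def .
      have ww: "cnj w * w = complex_of_real ((cmod c)\<^sup>2 / a)"
      proof -
        have "cnj w * w = complex_of_real ((cmod w)\<^sup>2)"
          by (metis complex_norm_square mult.commute of_real_power)
        also have "(cmod w)\<^sup>2 = (cmod c)\<^sup>2 / a" unfolding wc using s0 ss
          by (simp add: norm_divide power_divide power2_eq_square)
        finally show ?thesis .
      qed
      have "Im (fq n A x) = 0" "Re (fq n A x) \<ge> 0" using A unfolding fpsd_def by auto
      then show "Im (fq n A' x) = 0 \<and> 0 \<le> Re (fq n A' x)"
        unfolding A'fq[OF w_def] ww using cs a0 by (simp add: field_simps)
    qed
    have vzero: "v i = 0" if "i < n" "i < m" for i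
      unfolding v_def using Suc.prems(4)[of i p] that p by simp
    have A'zero: "A' i j = 0" if ij: "i < n" "j < n" "i < Suc m \<or> j < Suc m" for i j
    proof (cases "i < m \<or> j < m")
      case True
      then show ?thesis unfolding A'_def using Suc.prems(4)[OF ij(1,2)] vzero ij by auto
    next
      case F: False
      then have "i = p \<or> j = p" using ij unfolding p_def by auto
      then show ?thesis
      proof
        assume "i = p"
        then show ?thesis unfolding A'_def using vp cv[OF ij(2)] s0 by simp
      next
        assume "j = p"
        then show ?thesis unfolding A'_def v_def using vp s0 App ss
          by (simp add: field_simps) (metis of_real_mult)
      qed
    qed
    have IH: "0 \<le> Re (ftr n H A')"
      by (rule Suc.IH[OF k _ A'psd A'zero]) (use p p_def in auto)
    have split: "ftr n H A = ftr n H A' + fq n H v"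
    proof -
      have "ftr n H A = ftr n H A' + (\<Sum>i<n. \<Sum>j<n. H j i * (v i * cnj (v j)))"
        unfolding ftr_def A'_def by (simp add: sum.distrib[symmetric] algebra_simps)
      also have "(\<Sum>i<n. \<Sum>j<n. H j i * (v i * cnj (v j))) = fq n H v"
        unfolding fq_def by (subst sum.swap) (simp add: algebra_simps)
      finally show ?thesis .
    qed
    show ?thesis using IH H unfolding split fpsd_def by simp
  qed
qed

lemma ftr_pos:
  assumes "fpsd n H" "fpsd n A"
  shows "0 \<le> Re (ftr n H A)"
  by (rule ftr_pos_aux[OF assms(1) refl _ assms(2), of 0]) auto



lemma sum4_swap: "(\<Sum>i\<in>I. \<Sum>j\<in>J. \<Sum>a\<in>K. \<Sum>b\<in>L. f i j a b) = (\<Sum>a\<in>K. \<Sum>b\<in>L. \<Sum>i\<in>I. \<Sum>j\<in>J. f i j a b)"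
proof -
  have "(\<Sum>i\<in>I. \<Sum>j\<in>J. \<Sum>a\<in>K. \<Sum>b\<in>L. f i j a b) = (\<Sum>i\<in>I. \<Sum>a\<in>K. \<Sum>j\<in>J. \<Sum>b\<in>L. f i j a b)"
    by (simp only: sum.swap[of _ J K])
  also have "\<dots> = (\<Sum>i\<in>I. \<Sum>a\<in>K. \<Sum>b\<in>L. \<Sum>j\<in>J. f i j a b)"
    by (simp only: sum.swap[of _ J L])
  also have "\<dots> = (\<Sum>a\<in>K. \<Sum>i\<in>I. \<Sum>b\<in>L. \<Sum>j\<in>J. f i j a b)"
    by (simp only: sum.swap[of _ I K])
  also have "\<dots> = (\<Sum>a\<in>K. \<Sum>b\<in>L. \<Sum>i\<in>I. \<Sum>j\<in>J. f i j a b)"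
    by (simp only: sum.swap[of _ I L])
  finally show ?thesis .
qed

lemma cadj_carrier[simp]: "A \<in> carrier_mat r c \<Longrightarrow> cadj A \<in> carrier_mat c r"
  unfolding cadj_def by (intro carrier_matI) auto
lemma cadj_dims[simp]: "dim_row (cadj A) = dim_col A" "dim_col (cadj A) = dim_row A"
  by (simp_all add: cadj_def)
lemma cadj_index[simp]: "i < dim_col A \<Longrightarrow> j < dim_row A \<Longrightarrow> cadj A $$ (i,j) = cnj (A $$ (j,i))"
  by (simp add: cadj_def)

lemma mult_index_sum: "A \<in> carrier_mat r c \<Longrightarrow> B \<in> carrier_mat c d \<Longrightarrow> i < r \<Longrightarrow> j < d \<Longrightarrow>
  (A * B) $$ (i,j) = (\<Sum>k<c. A $$ (i,k) * B $$ (k,j))"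
  by (simp add: scalar_prod_def atLeast0LessThan)

lemma conj_entry:
  assumes B: "B \<in> carrier_mat r c" and A: "A \<in> carrier_mat c c" and ij: "i < r" "j < r"
  shows "(B * A * cadj B) $$ (i,j) = (\<Sum>a<c. \<Sum>b<c. B $$ (i,a) * A $$ (a,b) * cnj (B $$ (j,b)))"
proof -
  have "(B * A * cadj B) $$ (i,j) = (\<Sum>b<c. (B * A) $$ (i,b) * cadj B $$ (b,j))"
    using assms by (intro mult_index_sum[of _ r c]) auto
  also have "\<dots> = (\<Sum>b<c. (\<Sum>a<c. B $$ (i,a) * A $$ (a,b)) * cnj (B $$ (j,b)))"
  proof (intro sum.cong refl)
    fix b assume b: "b \<in> {..<c}"
    have "(B * A) $$ (i,b) = (\<Sum>a<c. B $$ (i,a) * A $$ (a,b))"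
      using b ij by (intro mult_index_sum[OF B A]) auto
    then show "(B * A) $$ (i,b) * cadj B $$ (b,j) = (\<Sum>a<c. B $$ (i,a) * A $$ (a,b)) * cnj (B $$ (j,b))"
      using b ij B by simp
  qed
  also have "\<dots> = (\<Sum>a<c. \<Sum>b<c. B $$ (i,a) * A $$ (a,b) * cnj (B $$ (j,b)))"
    by (simp add: sum_distrib_right) (rule sum.swap)
  finally show ?thesis .
qed

lemma qform_fq: "A \<in> carrier_mat n n \<Longrightarrow> v \<in> carrier_vec n \<Longrightarrow> qform A v = fq n (\<lambda>i j. A $$ (i,j)) (\<lambda>i. v $ i)"
  by (simp add: qform_def fq_def)

lemma fpsd_cong: "(\<And>i j. i < n \<Longrightarrow> j < n \<Longrightarrow> A i j = B i j) \<Longrightarrow> fpsd n A = fpsd n B"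
proof -
  assume h: "\<And>i j. i < n \<Longrightarrow> j < n \<Longrightarrow> A i j = B i j"
  have "fq n A x = fq n B x" for x unfolding fq_def using h by (intro sum.cong refl) auto
  then show ?thesis unfolding fpsd_def by simp
qed

lemma psd_fpsd: "psd n A \<Longrightarrow> fpsd n (\<lambda>i j. A $$ (i,j))"
  unfolding fpsd_def
proof
  fix x assume p: "psd n A"
  then have "A \<in> carrier_mat n n" unfolding psd_def by auto
  then have "qform A (vec n x) = fq n (\<lambda>i j. A $$ (i,j)) x"
    by (simp add: qform_fq fq_def)
  then show "Im (fq n (\<lambda>i j. A $$ (i, j)) x) = 0 \<and> 0 \<le> Re (fq n (\<lambda>i j. A $$ (i, j)) x)"
    using p unfolding psd_def by (metis vec_carrier)
qed

lemma qform_conj: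
  assumes B: "B \<in> carrier_mat r c" and A: "A \<in> carrier_mat c c" and v: "v \<in> carrier_vec r"
  shows "qform (B * A * cadj B) v = qform A (cadj B *\<^sub>v v)"
proof -
  have cv: "(cadj B *\<^sub>v v) $ a = (\<Sum>i<r. cnj (B $$ (i,a)) * v $ i)" if "a < c" for a
    using that B v by (simp add: scalar_prod_def atLeast0LessThan)
  have "qform (B * A * cadj B) v = (\<Sum>i<r. \<Sum>j<r. \<Sum>a<c. \<Sum>b<c. cnj (v $ i) * (B $$ (i,a) * A $$ (a,b) * cnj (B $$ (j,b))) * v $ j)"
  proof -
    have dv: "dim_vec v = r" using v by simp
    have "qform (B * A * cadj B) v = (\<Sum>i<r. \<Sum>j<r. cnj (v $ i) * (\<Sum>a<c. \<Sum>b<c. B $$ (i,a) * A $$ (a,b) * cnj (B $$ (j,b))) * v $ j)"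
      unfolding qform_def dv by (intro sum.cong refl) (simp add: conj_entry[OF B A])
    then show ?thesis by (simp add: sum_distrib_left sum_distrib_right)
  qed
  also have "\<dots> = (\<Sum>a<c. \<Sum>b<c. \<Sum>i<r. \<Sum>j<r. cnj (v $ i) * (B $$ (i,a) * A $$ (a,b) * cnj (B $$ (j,b))) * v $ j)"
    by (rule sum4_swap)
  also have "\<dots> = qform A (cadj B *\<^sub>v v)"
  proof -
    have dv: "dim_vec (cadj B *\<^sub>v v) = c" using B by simp
    have "qform A (cadj B *\<^sub>v v) = (\<Sum>a<c. \<Sum>b<c. cnj (\<Sum>i<r. cnj (B $$ (i,a)) * v $ i) * A $$ (a,b) * (\<Sum>j<r. cnj (B $$ (j,b)) * v $ j))"
      unfolding qform_def dv by (intro sum.cong refl) (auto simp del: index_mult_mat_vec simp add: cv)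
    then show ?thesis by (simp add: cnj_sum sum_distrib_left sum_distrib_right algebra_simps)
  qed
  finally show ?thesis .
qed

lemma psd_conj:
  assumes B: "B \<in> carrier_mat r c" and A: "psd c A"
  shows "psd r (B * A * cadj B)"
proof -
  have Ac: "A \<in> carrier_mat c c" using A unfolding psd_def by auto
  show ?thesis unfolding psd_def
  proof (intro conjI)
    show "B * A * cadj B \<in> carrier_mat r r" using B Ac by auto
    show "\<forall>v \<in> carrier_vec r. Im (qform (B * A * cadj B) v) = 0 \<and> 0 \<le> Re (qform (B * A * cadj B) v)"
    proof
      fix v :: "complex vec" assume v: "v \<in> carrier_vec r"
      have "cadj B *\<^sub>v v \<in> carrier_vec c" using mult_mat_vec_carrier[OF cadj_carrier[OF B] v] .
      then show "Im (qform (B * A * cadj B) v) = 0 \<and> 0 \<le> Re (qform (B * A * cadj B) v)"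
        using A qform_conj[OF B Ac v] unfolding psd_def by auto
    qed
  qed
qed

lemma mtrace_conj:
  assumes B: "B \<in> carrier_mat r c" and A: "A \<in> carrier_mat c c"
    and U: "cadj B * B = 1\<^sub>m c"
  shows "mtrace (B * A * cadj B) = mtrace A"
proof -
  have u: "(\<Sum>i<r. B $$ (i,a) * cnj (B $$ (i,b))) = (if b = a then 1 else 0)" if "a < c" "b < c" for a b
  proof -
    have "(cadj B * B) $$ (b,a) = (\<Sum>i<r. cnj (B $$ (i,b)) * B $$ (i,a))"
      using B that by (subst mult_index_sum[of _ c r _ c]) auto
    then show ?thesis using U that by (simp add: mult.commute)
  qed
  have "mtrace (B * A * cadj B) = (\<Sum>i<r. \<Sum>a<c. \<Sum>b<c. B $$ (i,a) * A $$ (a,b) * cnj (B $$ (i,b)))"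
  proof -
    have dr: "dim_row (B * A * cadj B) = r" using B by simp
    show ?thesis unfolding mtrace_def dr by (intro sum.cong refl conj_entry[OF B A]) auto
  qed
  also have "\<dots> = (\<Sum>a<c. \<Sum>b<c. A $$ (a,b) * (\<Sum>i<r. B $$ (i,a) * cnj (B $$ (i,b))))"
    by (simp add: sum_distrib_left sum.swap[of _ "{..<r}"] algebra_simps)
  also have "\<dots> = (\<Sum>a<c. A $$ (a,a))"
  proof (intro sum.cong refl)
    fix a assume a: "a \<in> {..<c}"
    have "(\<Sum>b<c. A $$ (a,b) * (\<Sum>i<r. B $$ (i,a) * cnj (B $$ (i,b)))) = (\<Sum>b<c. if b = a then A $$ (a,b) else 0)"
      using a by (intro sum.cong refl) (auto simp: u)
    then show "(\<Sum>b<c. A $$ (a,b) * (\<Sum>i<r. B $$ (i,a) * cnj (B $$ (i,b)))) = A $$ (a,a)"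
      using a by simp
  qed
  also have "\<dots> = mtrace A" unfolding mtrace_def using A by simp
  finally show ?thesis .
qed



lemma kron_dims[simp]: "dim_row (kron A B) = dim_row A * dim_row B" "dim_col (kron A B) = dim_col A * dim_col B"
  by (simp_all add: kron_def)

lemma kron_index: "i < dim_row A * dim_row B \<Longrightarrow> j < dim_col A * dim_col B \<Longrightarrow>
  kron A B $$ (i,j) = A $$ (i div dim_row B, j div dim_col B) * B $$ (i mod dim_row B, j mod dim_col B)"
  by (simp add: kron_def)

lemma div_lt: "i < a * (b::nat) \<Longrightarrow> i div b < a"
  by (simp add: less_mult_imp_div_less)
lemma mod_lt: "i < a * (b::nat) \<Longrightarrow> i mod b < b"
  by (metis mod_less_divisor mult_0_right neq0_conv not_less0)

lemma cadj_kron: "cadj (kron A B) = kron (cadj A) (cadj B)"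
proof (rule eq_matI)
  fix i j assume i: "i < dim_row (kron (cadj A) (cadj B))" and j: "j < dim_col (kron (cadj A) (cadj B))"
  then have i': "i < dim_col A * dim_col B" and j': "j < dim_row A * dim_row B" by simp_all
  show "cadj (kron A B) $$ (i, j) = kron (cadj A) (cadj B) $$ (i, j)"
    using i' j' by (simp add: kron_index div_lt mod_lt)
qed simp_all

lemma kron_mult:
  assumes "dim_col A = dim_row C" "dim_col B = dim_row D"
  shows "kron A B * kron C D = kron (A * C) (B * D)"
proof (rule eq_matI)
  fix i j assume i: "i < dim_row (kron (A * C) (B * D))" and j: "j < dim_col (kron (A * C) (B * D))"
  then have i': "i < dim_row A * dim_row B" and j': "j < dim_col C * dim_col D" by simp_all
  let ?cA = "dim_col A" and ?cB = "dim_col B"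
  have "(kron A B * kron C D) $$ (i,j) = (\<Sum>k<?cA * ?cB. kron A B $$ (i,k) * kron C D $$ (k,j))"
  proof (rule mult_index_sum)
    show "kron A B \<in> carrier_mat (dim_row A * dim_row B) (?cA * ?cB)" by (intro carrier_matI) auto
    show "kron C D \<in> carrier_mat (?cA * ?cB) (dim_col C * dim_col D)" using assms by (intro carrier_matI) auto
  qed (use i' j' in auto)
  also have "\<dots> = (\<Sum>k1<?cA. \<Sum>k2<?cB. kron A B $$ (i,k1*?cB+k2) * kron C D $$ (k1*?cB+k2,j))"
    by (rule sum_split_mult)
  also have "\<dots> = (\<Sum>k1<?cA. \<Sum>k2<?cB. (A $$ (i div dim_row B, k1) * C $$ (k1, j div dim_col D)) *
        (B $$ (i mod dim_row B, k2) * D $$ (k2, j mod dim_col D)))"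
  proof (intro sum.cong refl)
    fix k1 k2 assume k: "k1 \<in> {..<?cA}" "k2 \<in> {..<?cB}"
    have kk: "k1 * ?cB + k2 < ?cA * ?cB"
    proof -
      have "k1 * ?cB + k2 < (k1+1) * ?cB" using k by simp
      also have "\<dots> \<le> ?cA * ?cB" using k by (intro mult_right_mono) auto
      finally show ?thesis .
    qed
    have d: "(k1 * ?cB + k2) div ?cB = k1" "(k1 * ?cB + k2) mod ?cB = k2" using k by auto
    show "kron A B $$ (i,k1*?cB+k2) * kron C D $$ (k1*?cB+k2,j) = (A $$ (i div dim_row B, k1) * C $$ (k1, j div dim_col D)) *
        (B $$ (i mod dim_row B, k2) * D $$ (k2, j mod dim_col D))"
      using i' j' kk assms k by (simp add: kron_index d[unfolded assms] mult.commute mult.left_commute)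
  qed
  also have "\<dots> = (A * C) $$ (i div dim_row B, j div dim_col D) * (B * D) $$ (i mod dim_row B, j mod dim_col D)"
    using i' j' assms
    by (simp add: sum_product[symmetric] div_lt mod_lt scalar_prod_def atLeast0LessThan)
  also have "\<dots> = kron (A * C) (B * D) $$ (i,j)"
    using i' j' by (simp add: kron_index)
  finally show "(kron A B * kron C D) $$ (i,j) = kron (A * C) (B * D) $$ (i,j)" .
qed simp_all

lemma kron_one: "kron (1\<^sub>m a) (1\<^sub>m b) = 1\<^sub>m (a * b)"
proof (rule eq_matI)
  fix i j assume "i < dim_row (1\<^sub>m (a * b))" "j < dim_col (1\<^sub>m (a * b))"
  then have ij: "i < a * b" "j < a * b" by simp_all
  have "(i div b = j div b \<and> i mod b = j mod b) = (i = j)"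
    by (metis div_mult_mod_eq)
  then show "kron (1\<^sub>m a) (1\<^sub>m b) $$ (i, j) = 1\<^sub>m (a * b) $$ (i, j)"
    using ij by (auto simp: kron_index div_lt mod_lt)
qed simp_all



definition gate :: "bool \<Rightarrow> bool \<Rightarrow> complex mat" where
  "gate a b = (if a then pauliX else 1\<^sub>m 2) * (if b then pauliZ else 1\<^sub>m 2)"

lemma gate_dims[simp]: "dim_row (gate a b) = 2" "dim_col (gate a b) = 2"
  by (simp_all add: gate_def pauliX_def pauliZ_def)

lemma gate_carrier[simp]: "gate a b \<in> carrier_mat 2 2"
  by (intro carrier_matI) simp_all

lemma less2: "(i::nat) < 2 \<longleftrightarrow> i = 0 \<or> i = 1" by auto

lemma sum2: "(\<Sum>k\<in>{0..<2::nat}. f k) = f 0 + f 1"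
  by (simp add: numeral_2_eq_2)

lemma gate_unitary: "cadj (gate a b) * gate a b = 1\<^sub>m 2"
  by (rule eq_matI) (auto simp: gate_def pauliX_def pauliZ_def less2 scalar_prod_def sum2 cadj_def)

lemma pauliU_carrier: "pauliU r \<in> carrier_mat (2^(length r div 2)) (2^(length r div 2))"
proof (induction r rule: pauliU.induct)
  case (3 a b r)
  then show ?case by (intro carrier_matI) (auto simp: gate_def[symmetric])
qed simp_all

lemma pauliU_unitary: "cadj (pauliU r) * pauliU r = 1\<^sub>m (2^(length r div 2))"
proof (induction r rule: pauliU.induct)
  case 1 then show ?case by (rule eq_matI) (auto simp: cadj_def scalar_prod_def)
next
  case (2 a) then show ?case by (rule eq_matI) (auto simp: cadj_def scalar_prod_def)
next
  case (3 a b r)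
  have U: "pauliU r \<in> carrier_mat (2^(length r div 2)) (2^(length r div 2))" by (rule pauliU_carrier)
  have "cadj (pauliU (a # b # r)) * pauliU (a # b # r) = kron (cadj (gate a b)) (cadj (pauliU r)) * kron (gate a b) (pauliU r)"
    by (simp add: gate_def[symmetric] cadj_kron)
  also have "\<dots> = kron (cadj (gate a b) * gate a b) (cadj (pauliU r) * pauliU r)"
    using U by (intro kron_mult) auto
  also have "\<dots> = 1\<^sub>m (2 * 2^(length r div 2))" by (simp add: gate_unitary 3 kron_one)
  finally show ?case by simp
qed

lemma padV_carrier: "padV d1 d2 \<in> carrier_mat (2^d1) (2^d2)"
  unfolding padV_def by (intro carrier_matI) simp_all

lemma padV_unitary:
  assumes "d2 \<le> d1"
  shows "cadj (padV d1 d2) * padV d1 d2 = 1\<^sub>m (2^d2)"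
proof (rule eq_matI)
  fix i j assume "i < dim_row (1\<^sub>m (2 ^ d2))" "j < dim_col (1\<^sub>m (2 ^ d2))"
  then have ij: "i < 2^d2" "j < 2^d2" by auto
  define m where "m = (2::nat)^(d1-d2)"
  have m0: "m > 0" unfolding m_def by simp
  have lt: "k * m < 2^d1" if "k < 2^d2" for k
  proof -
    have "k * m < 2^d2 * m" using that m0 by simp
    also have "2^d2 * m = (2::nat)^d1" unfolding m_def using assms by (simp add: power_add[symmetric])
    finally show ?thesis .
  qed
  have "(cadj (padV d1 d2) * padV d1 d2) $$ (i,j) = (\<Sum>k<2^d1. cnj (padV d1 d2 $$ (k,i)) * padV d1 d2 $$ (k,j))"
    using ij padV_carrier[of d1 d2] by (subst mult_index_sum[of _ "2^d2" "2^d1" _ "2^d2"]) auto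
  also have "\<dots> = (\<Sum>k<2^d1. if k = i * m then (if k = j * m then 1 else 0) else 0)"
    using ij by (intro sum.cong refl) (auto simp: padV_def m_def)
  also have "\<dots> = (if i = j then 1 else 0)"
    using lt[OF ij(1)] m0 by (simp add: sum.delta)
  finally show "(cadj (padV d1 d2) * padV d1 d2) $$ (i,j) = 1\<^sub>m (2 ^ d2) $$ (i,j)" using ij by simp
qed (auto simp: padV_def)

lemma cnj_ind: "cnj (if P then 1 else 0) = (if P then 1 else (0::complex))" by simp

lemma perm_conj_entry:
  assumes s: "\<sigma> permutes {..<n}" and M: "M \<in> carrier_mat n n" and ij: "i < n" "j < n"
  shows "(perm_mat n \<sigma> * M * cadj (perm_mat n \<sigma>)) $$ (i,j) = M $$ (Hilbert_Choice.inv \<sigma> i, Hilbert_Choice.inv \<sigma> j)"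
proof -
  have P: "perm_mat n \<sigma> \<in> carrier_mat n n" unfolding perm_mat_def by (intro carrier_matI) simp_all
  have iff: "(k = \<sigma> a) = (a = Hilbert_Choice.inv \<sigma> k)" for k a
    using s by (metis permutes_inverses(1) permutes_inverses(2))
  have inv_lt: "Hilbert_Choice.inv \<sigma> k < n" if "k < n" for k
    using s that by (metis lessThan_iff permutes_in_image permutes_inv)
  have "(perm_mat n \<sigma> * M * cadj (perm_mat n \<sigma>)) $$ (i,j) =
      (\<Sum>a<n. \<Sum>b<n. perm_mat n \<sigma> $$ (i,a) * M $$ (a,b) * cnj (perm_mat n \<sigma> $$ (j,b)))"
    by (rule conj_entry[OF P M ij])
  also have "\<dots> = (\<Sum>a<n. if a = Hilbert_Choice.inv \<sigma> i then (\<Sum>b<n. if b = Hilbert_Choice.inv \<sigma> j then M $$ (a,b) else 0) else 0)"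
    using ij by (intro sum.cong refl) (auto simp: perm_mat_def iff cnj_ind mult_if0 intro!: sum.cong)
  also have "\<dots> = M $$ (Hilbert_Choice.inv \<sigma> i, Hilbert_Choice.inv \<sigma> j)"
    using inv_lt ij by (simp add: sum.delta cong: if_cong)
  finally show ?thesis .
qed



lemma block_sum: "(\<Sum>a<N+N. \<Sum>b<N+N. h a b) = (\<Sum>a<N. \<Sum>b<N. h a b + h a (N+b) + h (N+a) b + h (N+a) (N+b))"
  for h :: "nat \<Rightarrow> nat \<Rightarrow> 'a::comm_monoid_add"
  by (simp add: sum_split_add sum.distrib ac_simps)

lemma fq_block: "fq (N+N) F (\<lambda>k. if k < N then y k else z (k - N)) =
  (\<Sum>a<N. \<Sum>b<N. cnj (y a) * F a b * y b + cnj (y a) * F a (N+b) * z b + cnj (z a) * F (N+a) b * y b + cnj (z a) * F (N+a) (N+b) * z b)"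
  unfolding fq_def block_sum by simp

lemma if0_mult: "(if P then 1 else 0) * (a::complex) = (if P then a else 0)" by simp

lemma fq_delta_minus: "fq n (\<lambda>i j. (if i = j then 1 else 0) - X i j) x = (\<Sum>i<n. cnj (x i) * x i) - fq n X x"
proof -
  have "fq n (\<lambda>i j. (if i = j then 1 else 0) - X i j) x = (\<Sum>i<n. \<Sum>j<n. (if i = j then cnj (x i) * x j else 0)) - fq n X x"
    unfolding fq_def by (simp add: algebra_simps sum_subtractf mult_if0 if0_mult)
  then show ?thesis by (simp add: sum.delta)
qed

lemma fq_delta_plus: "fq n (\<lambda>i j. (if i = j then 1 else 0) + X i j) x = (\<Sum>i<n. cnj (x i) * x i) + fq n X x"
proof -
  have "fq n (\<lambda>i j. (if i = j then 1 else 0) + X i j) x = (\<Sum>i<n. \<Sum>j<n. (if i = j then cnj (x i) * x j else 0)) + fq n X x"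
    unfolding fq_def by (simp add: algebra_simps sum.distrib mult_if0 if0_mult)
  then show ?thesis by (simp add: sum.delta)
qed

lemma norm_block: "(\<Sum>k<(N::nat)+N. cnj (if k < N then y k else z (k - N)) * (if k < N then y k else z (k - N))) =
   (\<Sum>a<N. cnj (y a) * y a) + (\<Sum>a<N. cnj (z a) * z a)"
  by (subst sum_split_add) simp

lemma aux_real:
  fixes iu iw ru rw s :: real
  assumes "iu = 0" "iw = 0" "ru \<le> 2 * s" "rw \<le> 2 * s" "0 \<le> ru" "0 \<le> rw" "is = 0"
  shows "(iu - iw) / 2 = 0 \<and> is = 0 \<and> (ru - rw) / 2 \<le> s \<and> - ((ru - rw) / 2) \<le> s"
proof (intro conjI)
  show "(iu - iw) / 2 = 0" using assms by simp
  show "is = 0" by fact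
  have "ru - rw \<le> 2 * s" using assms by linarith
  then show "(ru - rw) / 2 \<le> s" by (simp add: field_simps)
  have "rw - ru \<le> 2 * s" using assms by linarith
  then show "- ((ru - rw) / 2) \<le> s" by (simp add: field_simps)
qed

lemma aux_cpx:
  fixes g s :: complex
  assumes "Im g = 0" "Im s = 0" "Re g \<le> Re s" "- Re g \<le> Re s"
  shows "Im (s - g) = 0 \<and> 0 \<le> Re (s - g)" "Im (s + g) = 0 \<and> 0 \<le> Re (s + g)"
proof -
  have "Re (s - g) = Re s - Re g" "Re (s + g) = Re s + Re g" "Im (s - g) = Im s - Im g" "Im (s + g) = Im s + Im g"
    by simp_all
  then show "Im (s - g) = 0 \<and> 0 \<le> Re (s - g)" "Im (s + g) = 0 \<and> 0 \<le> Re (s + g)"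
    using assms by (smt (verit))+
qed

lemma G_bound:
  assumes F: "fpsd (N+N) F" and IF: "fpsd (N+N) (\<lambda>i j. (if i = j then 1 else 0) - F i j)"
  shows "fpsd N (\<lambda>a b. (if a = b then 1 else 0) - (F a (N+b) + F (N+a) b))"
    and "fpsd N (\<lambda>a b. (if a = b then 1 else 0) + (F a (N+b) + F (N+a) b))"
proof -
  have main: "Im (fq N (\<lambda>a b. F a (N+b) + F (N+a) b) x) = 0 \<and> Im (\<Sum>i<N. cnj (x i) * x i) = 0 \<and>
     Re (fq N (\<lambda>a b. F a (N+b) + F (N+a) b) x) \<le> Re (\<Sum>i<N. cnj (x i) * x i) \<and>
     - Re (fq N (\<lambda>a b. F a (N+b) + F (N+a) b) x) \<le> Re (\<Sum>i<N. cnj (x i) * x i)" for x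
  proof -
    define S where "S = (\<Sum>i<N. cnj (x i) * x i)"
    define u where "u k = (if k < N then x k else x (k - N))" for k
    define w where "w k = (if k < N then x k else - x (k - N))" for k
    have w': "w = (\<lambda>k. if k < N then x k else (\<lambda>i. - x i) (k - N))" unfolding w_def by simp
    define P1 where "P1 = (\<Sum>a<N. \<Sum>b<N. cnj (x a) * F a b * x b)"
    define P2 where "P2 = (\<Sum>a<N. \<Sum>b<N. cnj (x a) * F a (N+b) * x b)"
    define P3 where "P3 = (\<Sum>a<N. \<Sum>b<N. cnj (x a) * F (N+a) b * x b)"
    define P4 where "P4 = (\<Sum>a<N. \<Sum>b<N. cnj (x a) * F (N+a) (N+b) * x b)"
    have fu: "fq (N+N) F u = P1 + P2 + P3 + P4"
      unfolding u_def fq_block P1_def P2_def P3_def P4_def by (simp add: sum.distrib)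
    have fw: "fq (N+N) F w = P1 - P2 - P3 + P4"
      unfolding w' fq_block[of N F x "\<lambda>i. - x i"] P1_def P2_def P3_def P4_def by (simp add: sum.distrib sum_subtractf)
    have fG: "fq N (\<lambda>a b. F a (N+b) + F (N+a) b) x = P2 + P3"
      unfolding fq_def P2_def P3_def by (simp add: sum.distrib algebra_simps)
    have nu: "(\<Sum>k<N+N. cnj (u k) * u k) = 2 * S"
      unfolding u_def norm_block S_def by simp
    have nw: "(\<Sum>k<N+N. cnj (w k) * w k) = 2 * S"
      unfolding w' norm_block[of N x "\<lambda>i. - x i"] S_def by simp
    have a1: "Im (fq (N+N) F u) = 0" "Re (fq (N+N) F u) \<ge> 0"
      "Im (fq (N+N) F w) = 0" "Re (fq (N+N) F w) \<ge> 0" using F unfolding fpsd_def by auto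
    have a2: "Im (2 * S - fq (N+N) F u) = 0" "Re (2 * S - fq (N+N) F u) \<ge> 0"
      "Im (2 * S - fq (N+N) F w) = 0" "Re (2 * S - fq (N+N) F w) \<ge> 0"
    proof -
      have "Im (fq (N+N) (\<lambda>i j. (if i = j then 1 else 0) - F i j) u) = 0 \<and> Re (fq (N+N) (\<lambda>i j. (if i = j then 1 else 0) - F i j) u) \<ge> 0"
        "Im (fq (N+N) (\<lambda>i j. (if i = j then 1 else 0) - F i j) w) = 0 \<and> Re (fq (N+N) (\<lambda>i j. (if i = j then 1 else 0) - F i j) w) \<ge> 0"
        using IF unfolding fpsd_def by blast+
      then show "Im (2 * S - fq (N+N) F u) = 0" "Re (2 * S - fq (N+N) F u) \<ge> 0"
        "Im (2 * S - fq (N+N) F w) = 0" "Re (2 * S - fq (N+N) F w) \<ge> 0"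
        unfolding fq_delta_minus nu nw by auto
    qed
    have G: "P2 + P3 = (fq (N+N) F u - fq (N+N) F w) / 2" unfolding fu fw by simp
    have r: "Im S = 0" "Re (fq (N+N) F u) \<le> 2 * Re S" "Re (fq (N+N) F w) \<le> 2 * Re S" using a1 a2 by auto
    have e: "Re ((fq (N+N) F u - fq (N+N) F w) / 2) = (Re (fq (N+N) F u) - Re (fq (N+N) F w)) / 2"
       "Im ((fq (N+N) F u - fq (N+N) F w) / 2) = (Im (fq (N+N) F u) - Im (fq (N+N) F w)) / 2" by simp_all
    show ?thesis unfolding fG G S_def[symmetric] e using a1 r aux_real
      by metis
  qed
  show "fpsd N (\<lambda>a b. (if a = b then 1 else 0) - (F a (N+b) + F (N+a) b))"
    unfolding fpsd_def fq_delta_minus using main aux_cpx(1) by blast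
  show "fpsd N (\<lambda>a b. (if a = b then 1 else 0) + (F a (N+b) + F (N+a) b))"
    unfolding fpsd_def fq_delta_plus using main aux_cpx(2) by blast
qed

lemma fq_reindex:
  assumes s: "\<sigma> permutes {..<n}"
  shows "fq n (\<lambda>a b. X (\<sigma> a) (\<sigma> b)) x = fq n X (\<lambda>i. x (Hilbert_Choice.inv \<sigma> i))"
proof -
  have b: "bij_betw \<sigma> {..<n} {..<n}" using permutes_imp_bij[OF s] .
  have ii: "Hilbert_Choice.inv \<sigma> (\<sigma> a) = a" for a using permutes_inverses(2)[OF s] .
  have "fq n X (\<lambda>i. x (Hilbert_Choice.inv \<sigma> i)) = (\<Sum>i<n. \<Sum>j<n. cnj (x (Hilbert_Choice.inv \<sigma> i)) * X i j * x (Hilbert_Choice.inv \<sigma> j))"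
    unfolding fq_def ..
  also have "\<dots> = (\<Sum>a<n. \<Sum>j<n. cnj (x (Hilbert_Choice.inv \<sigma> (\<sigma> a))) * X (\<sigma> a) j * x (Hilbert_Choice.inv \<sigma> j))"
    by (rule sum.reindex_bij_betw[OF b, symmetric])
  also have "\<dots> = (\<Sum>a<n. \<Sum>b<n. cnj (x (Hilbert_Choice.inv \<sigma> (\<sigma> a))) * X (\<sigma> a) (\<sigma> b) * x (Hilbert_Choice.inv \<sigma> (\<sigma> b)))"
    by (intro sum.cong refl sum.reindex_bij_betw[OF b, symmetric])
  finally show ?thesis unfolding fq_def ii by simp
qed

lemma fpsd_reindex:
  assumes s: "\<sigma> permutes {..<n}" and X: "fpsd n X"
  shows "fpsd n (\<lambda>a b. X (\<sigma> a) (\<sigma> b))"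
  using X unfolding fpsd_def fq_reindex[OF s] by blast

lemma mtrace_mult: "A \<in> carrier_mat n n \<Longrightarrow> B \<in> carrier_mat n n \<Longrightarrow>
  mtrace (A * B) = (\<Sum>i<n. \<Sum>j<n. A $$ (i,j) * B $$ (j,i))"
proof -
  assume A: "A \<in> carrier_mat n n" and B: "B \<in> carrier_mat n n"
  have d: "dim_row (A * B) = n" using A by simp
  show ?thesis unfolding mtrace_def d by (intro sum.cong refl mult_index_sum[OF A B]) auto
qed



theorem theorem14:
  fixes d1 d2 \<eta> :: nat and \<epsilon> :: real
    and Mo Mc :: "complex mat" and k k' :: "bool list" and \<sigma> :: "nat \<Rightarrow> nat"
    and Mo' Mc' Mc'' Ma0 Ma1 Mf0 Mf1 :: "complex mat"
  assumes d: "d1 \<ge> d2" "d2 \<ge> 1"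
    and Mo: "pos_def (2^d1) Mo" "density (2^d1) Mo"
    and Mc: "density (2^d2) Mc"
    and k: "length k = 2 * d1" and k': "length k' = 2 * d2"
    and \<sigma>: "\<sigma> permutes {..<2^(d1+1)}"
    and Mo'_def: "Mo' = pauliU k * Mo * cadj (pauliU k)"
    and Mc'_def: "Mc' = pauliU k' * Mc * cadj (pauliU k')"
    and Mc''_def: "Mc'' = padV d1 d2 * Mc' * cadj (padV d1 d2)"
    and Ma0_def: "Ma0 = four_block_mat ((1/2) \<cdot>\<^sub>m Mo') (0\<^sub>m (2^d1) (2^d1))
                                        (0\<^sub>m (2^d1) (2^d1)) ((1/2) \<cdot>\<^sub>m Mo')"
    and Ma1_def: "Ma1 = four_block_mat ((1/2) \<cdot>\<^sub>m Mo') ((1 / of_nat \<eta>) \<cdot>\<^sub>m Mc'')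
                                        ((1 / of_nat \<eta>) \<cdot>\<^sub>m cadj Mc'') ((1/2) \<cdot>\<^sub>m Mo')"
    and Mf0_def: "Mf0 = perm_mat (2^(d1+1)) \<sigma> * Ma0 * cadj (perm_mat (2^(d1+1)) \<sigma>)"
    and Mf1_def: "Mf1 = perm_mat (2^(d1+1)) \<sigma> * Ma1 * cadj (perm_mat (2^(d1+1)) \<sigma>)"
    and \<epsilon>: "\<epsilon> > 0"
    and \<eta>: "\<eta> > 0" "1 / real \<eta> < \<epsilon>"
    and \<eta>2: "1 / (real \<eta>)\<^sup>2 * opnorm (Mc'' * minv Mo' * Mc'') \<le> 1/4 * lambda_min Mo'"
  shows "\<forall>E. effect (2^(d1+1)) E \<longrightarrow> \<bar>accept_prob E Mf0 - accept_prob E Mf1\<bar> < \<epsilon>"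
proof (intro allI impI)
  fix E assume eff: "effect (2^(d1+1)) E"
  define N where "N = (2::nat)^d1"
  have n2: "(2::nat)^(d1+1) = N + N" unfolding N_def by simp
  define \<tau> where "\<tau> = Hilbert_Choice.inv \<sigma>"
  have s: "\<sigma> permutes {..<N+N}" using \<sigma> n2 by simp
  have st: "\<tau> (\<sigma> a) = a" for a unfolding \<tau>_def using permutes_inverses(2)[OF s] .
  have bij: "bij_betw \<sigma> {..<N+N} {..<N+N}" using permutes_imp_bij[OF s] .
  have Uk: "pauliU k \<in> carrier_mat N N" using pauliU_carrier[of k] k unfolding N_def by simp
  have Uk': "pauliU k' \<in> carrier_mat (2^d2) (2^d2)" using pauliU_carrier[of k'] k' by simp
  have Moc: "Mo \<in> carrier_mat N N" using Mo(2) unfolding density_def psd_def N_def by auto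
  have Mcc: "Mc \<in> carrier_mat (2^d2) (2^d2)" using Mc unfolding density_def psd_def by auto
  have Mo'c: "Mo' \<in> carrier_mat N N" unfolding Mo'_def using Uk Moc by auto
  have Mc'c: "Mc' \<in> carrier_mat (2^d2) (2^d2)" unfolding Mc'_def using Uk' Mcc by auto
  have V: "padV d1 d2 \<in> carrier_mat N (2^d2)" using padV_carrier unfolding N_def .
  have Mc''c: "Mc'' \<in> carrier_mat N N" unfolding Mc''_def using V Mc'c by auto
  have psdMc': "psd (2^d2) Mc'" unfolding Mc'_def by (rule psd_conj[OF Uk']) (use Mc density_def in auto)
  have psdMc'': "psd N Mc''" unfolding Mc''_def by (rule psd_conj[OF V psdMc'])
  have trMc': "mtrace Mc' = 1" unfolding Mc'_def using mtrace_conj[OF Uk' Mcc] pauliU_unitary[of k'] k' Mc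
    unfolding density_def by simp
  have trMc'': "mtrace Mc'' = 1" unfolding Mc''_def using mtrace_conj[OF V Mc'c padV_unitary[OF d(1)]] trMc' by simp
  define C where "C i j = Mc'' $$ (i,j)" for i j
  have Cpsd: "fpsd N C" unfolding C_def by (rule psd_fpsd[OF psdMc''])
  have Ctr: "(\<Sum>i<N. C i i) = 1" using trMc'' Mc''c unfolding mtrace_def C_def by simp
  have Cherm: "C j i = cnj (C i j)" if "i < N" "j < N" for i j using fpsd_herm[OF Cpsd that] .
  have Epsd: "psd (N+N) E" "psd (N+N) (1\<^sub>m (N+N) - E)" using eff unfolding effect_def n2 by auto
  have Ec: "E \<in> carrier_mat (N+N) (N+N)" using Epsd unfolding psd_def by auto
  define F where "F a b = E $$ (\<sigma> a, \<sigma> b)" for a b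
  have Fpsd: "fpsd (N+N) F" unfolding F_def by (rule fpsd_reindex[OF s psd_fpsd[OF Epsd(1)]])
  have IE: "fpsd (N+N) (\<lambda>i j. (if i = j then 1 else 0) - E $$ (i,j))"
  proof -
    have "fpsd (N+N) (\<lambda>i j. (1\<^sub>m (N+N) - E) $$ (i,j))" by (rule psd_fpsd[OF Epsd(2)])
    moreover have "fpsd (N+N) (\<lambda>i j. (1\<^sub>m (N+N) - E) $$ (i,j)) = fpsd (N+N) (\<lambda>i j. (if i = j then 1 else 0) - E $$ (i,j))"
      by (rule fpsd_cong) (use Ec in auto)
    ultimately show ?thesis by simp
  qed
  have IFpsd: "fpsd (N+N) (\<lambda>a b. (if a = b then 1 else 0) - F a b)"
  proof -
    have "fpsd (N+N) (\<lambda>a b. (if \<sigma> a = \<sigma> b then 1 else 0) - E $$ (\<sigma> a, \<sigma> b))" by (rule fpsd_reindex[OF s IE])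
    moreover have "\<sigma> a = \<sigma> b \<longleftrightarrow> a = b" for a b using permutes_inj[OF s] by (auto dest: injD)
    ultimately show ?thesis unfolding F_def by simp
  qed
  define G where "G a b = F a (N+b) + F (N+a) b" for a b
  have G1: "fpsd N (\<lambda>a b. (if a = b then 1 else 0) - G a b)" unfolding G_def by (rule G_bound(1)[OF Fpsd IFpsd])
  have G2: "fpsd N (\<lambda>a b. (if a = b then 1 else 0) + G a b)" unfolding G_def by (rule G_bound(2)[OF Fpsd IFpsd])
  have ftr1: "0 \<le> Re (ftr N (\<lambda>a b. (if a = b then 1 else 0) - G a b) C)" by (rule ftr_pos[OF G1 Cpsd])
  have ftr2: "0 \<le> Re (ftr N (\<lambda>a b. (if a = b then 1 else 0) + G a b) C)" by (rule ftr_pos[OF G2 Cpsd])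
  have ftrm: "ftr N (\<lambda>a b. (if a = b then 1 else 0) - G a b) C = 1 - ftr N G C"
  proof -
    have "ftr N (\<lambda>a b. (if a = b then 1 else 0) - G a b) C = (\<Sum>i<N. \<Sum>j<N. (if j = i then C i j else 0)) - ftr N G C"
      unfolding ftr_def by (simp add: left_diff_distrib sum_subtractf if0_mult)
    then show ?thesis using Ctr by (simp add: sum.delta)
  qed
  have ftrp: "ftr N (\<lambda>a b. (if a = b then 1 else 0) + G a b) C = 1 + ftr N G C"
  proof -
    have "ftr N (\<lambda>a b. (if a = b then 1 else 0) + G a b) C = (\<Sum>i<N. \<Sum>j<N. (if j = i then C i j else 0)) + ftr N G C"
      unfolding ftr_def by (simp add: distrib_right sum.distrib if0_mult)
    then show ?thesis using Ctr by (simp add: sum.delta)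
  qed
  have R: "\<bar>Re (ftr N G C)\<bar> \<le> 1" using ftr1 ftr2 unfolding ftrm ftrp by simp
  have dMo: "dim_row Mo' = N" "dim_col Mo' = N" using Mo'c by auto
  have dMc: "dim_row Mc'' = N" "dim_col Mc'' = N" using Mc''c by auto
  define D where "D a b = Ma0 $$ (a,b) - Ma1 $$ (a,b)" for a b
  have Ma0c: "Ma0 \<in> carrier_mat (N+N) (N+N)" unfolding Ma0_def using Mo'c by auto
  have Ma1c: "Ma1 \<in> carrier_mat (N+N) (N+N)" unfolding Ma1_def using Mo'c by auto
  have P: "perm_mat (N+N) \<sigma> \<in> carrier_mat (N+N) (N+N)" unfolding perm_mat_def by (intro carrier_matI) simp_all
  have Mf0c: "Mf0 \<in> carrier_mat (N+N) (N+N)" unfolding Mf0_def n2 using P Ma0c by auto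
  have Mf1c: "Mf1 \<in> carrier_mat (N+N) (N+N)" unfolding Mf1_def n2 using P Ma1c by auto
  have Mf0e: "Mf0 $$ (i,j) = Ma0 $$ (\<tau> i, \<tau> j)" if "i < N+N" "j < N+N" for i j
    unfolding Mf0_def n2 \<tau>_def by (rule perm_conj_entry[OF s Ma0c that])
  have Mf1e: "Mf1 $$ (i,j) = Ma1 $$ (\<tau> i, \<tau> j)" if "i < N+N" "j < N+N" for i j
    unfolding Mf1_def n2 \<tau>_def by (rule perm_conj_entry[OF s Ma1c that])
  have tr0: "mtrace (E * Mf0) = (\<Sum>i<N+N. \<Sum>j<N+N. E $$ (i,j) * Ma0 $$ (\<tau> j, \<tau> i))"
    unfolding mtrace_mult[OF Ec Mf0c] by (intro sum.cong refl) (simp add: Mf0e)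
  have tr1: "mtrace (E * Mf1) = (\<Sum>i<N+N. \<Sum>j<N+N. E $$ (i,j) * Ma1 $$ (\<tau> j, \<tau> i))"
    unfolding mtrace_mult[OF Ec Mf1c] by (intro sum.cong refl) (simp add: Mf1e)
  have "mtrace (E * Mf0) - mtrace (E * Mf1) = (\<Sum>i<N+N. \<Sum>j<N+N. E $$ (i,j) * D (\<tau> j) (\<tau> i))"
    unfolding tr0 tr1 D_def by (simp add: sum_subtractf algebra_simps)
  also have "\<dots> = (\<Sum>a<N+N. \<Sum>j<N+N. E $$ (\<sigma> a, j) * D (\<tau> j) (\<tau> (\<sigma> a)))"
    by (rule sum.reindex_bij_betw[OF bij, symmetric])
  also have "\<dots> = (\<Sum>a<N+N. \<Sum>b<N+N. E $$ (\<sigma> a, \<sigma> b) * D (\<tau> (\<sigma> b)) (\<tau> (\<sigma> a)))"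
    by (intro sum.cong refl sum.reindex_bij_betw[OF bij, symmetric])
  also have "\<dots> = (\<Sum>a<N+N. \<Sum>b<N+N. F a b * D b a)"
    unfolding st F_def ..
  also have "\<dots> = (\<Sum>a<N. \<Sum>b<N. F a b * D b a + F a (N+b) * D (N+b) a + F (N+a) b * D b (N+a) + F (N+a) (N+b) * D (N+b) (N+a))"
    by (rule block_sum)
  also have "\<dots> = (\<Sum>a<N. \<Sum>b<N. - (1 / of_nat \<eta>) * (G a b * C b a))"
  proof (intro sum.cong refl)
    fix a b assume a: "a \<in> {..<N}" and b: "b \<in> {..<N}"
    then have a': "a < N" and b': "b < N" by auto
    have D1: "D b a = 0" unfolding D_def Ma0_def Ma1_def using a' b' dMo dMc by simp
    have D2: "D (N+b) a = - (1 / of_nat \<eta>) * C b a" unfolding D_def Ma0_def Ma1_def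
      using a' b' dMo dMc Cherm[OF a' b'] by (simp add: C_def N_def)
    have D3: "D b (N+a) = - (1 / of_nat \<eta>) * C b a" unfolding D_def Ma0_def Ma1_def
      using a' b' dMo dMc by (simp add: C_def N_def)
    have D4: "D (N+b) (N+a) = 0" unfolding D_def Ma0_def Ma1_def using a' b' dMo dMc by simp
    show "F a b * D b a + F a (N+b) * D (N+b) a + F (N+a) b * D b (N+a) + F (N+a) (N+b) * D (N+b) (N+a) =
       - (1 / of_nat \<eta>) * (G a b * C b a)"
      unfolding D1 D2 D3 D4 G_def by (simp add: algebra_simps)
  qed
  also have "\<dots> = - (1 / of_nat \<eta>) * ftr N G C"
    unfolding ftr_def sum_distrib_left by (rule sum.swap)
  finally have diff: "mtrace (E * Mf0) - mtrace (E * Mf1) = - (1 / of_nat \<eta>) * ftr N G C" .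
  have "accept_prob E Mf0 - accept_prob E Mf1 = Re (mtrace (E * Mf0) - mtrace (E * Mf1))"
    unfolding accept_prob_def by simp
  also have "\<dots> = - (1 / real \<eta>) * Re (ftr N G C)"
    unfolding diff by simp
  finally have "\<bar>accept_prob E Mf0 - accept_prob E Mf1\<bar> = (1 / real \<eta>) * \<bar>Re (ftr N G C)\<bar>"
    by (simp add: abs_mult)
  also have "\<dots> \<le> (1 / real \<eta>) * 1" by (rule mult_left_mono[OF R]) simp
  also have "\<dots> < \<epsilon>" using \<eta> by simp
  finally show "\<bar>accept_prob E Mf0 - accept_prob E Mf1\<bar> < \<epsilon>" .
qed


end
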